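(* Let $m\ge1$, $K_1,\dots,K_m>0$, and $f_i(x)=\frac{K_i x}{K_i+x}$. For $\rho\in[0,1)$ let $(\mathbf{u}(\rho),\mu(\rho))$ be the unique steady state of the infinite-population foraging model, i.e. the unique solution with $u_i\ge0$, $\sum_iu_i=1$, $0<\mu<1$ of $$u_i=\Big((1-\rho)+\frac{\rho}{\mu}\Big)f_i(u_i)+\frac{1-\rho}{m}(1-\mu)\ (i=1,\dots,m),\qquad \mu=\sum_{i=1}^m f_i(u_i).$$ Then $$\lim_{\rho\to1}u_i(\rho)=\frac{K_i}{\sum_{j=1}^mK_j}\quad(i=1,\dots,m),\qquad \lim_{\rho\to1}\mu(\rho)=\frac{\sum_{j=1}^mK_j}{1+\sum_{j=1}^mK_j}.$$
   Context: The infinite-population foraging model is the map on the probability simplex in $\mathbb{R}^m$ given by $\mathbf{u}_{n+1}=\mathbf{f}(\mathbf{u}_n)+(1-\langle\mathbf{1},\mathbf{f}(\mathbf{u}_n)\rangle)\big(\frac{\rho}{\langle\mathbf{1},\mathbf{f}(\mathbf{u}_n)\rangle}\mathbf{f}(\mathbf{u}_n)+\frac{1-\rho}{m}\mathbf{1}\big)$, where $\mathbf{f}(\mathbf{u})=(f_1(u_1),\dots,f_m(u_m))^T$ and $\rho\in[0,1]$ is the recruitment probability; $K_i$ is the resource abundance at site $i$. For $\rho<1$ this map has a unique fixed point on the simplex, which is the steady state referred to. At $\rho=1$ the steady states are the points with $u_i=K_i/\sum_{j\in\mathcal I}K_j$ for $i\in\mathcal I$ and $u_i=0$ otherwise, for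 any nonempty $\mathcal I\subset\{1,\dots,m\}$. *)

theory Defs
  imports "HOL-Analysis.Analysis"
begin

definition forage_f :: "real \<Rightarrow> real \<Rightarrow> real" where
  "forage_f Ki x = Ki * x / (Ki + x)"

definition is_steady_state ::
  "nat \<Rightarrow> (nat \<Rightarrow> real) \<Rightarrow> real \<Rightarrow> (nat \<Rightarrow> real) \<Rightarrow> real \<Rightarrow> bool" where
  "is_steady_state m K \<rho> u \<mu> \<longleftrightarrow>
     (\<forall>i\<in>{1..m}. u i \<ge> 0) \<and> (\<Sum>i=1..m. u i) = 1 \<and> 0 < \<mu> \<and> \<mu> < 1 \<and>
     (\<forall>i\<in>{1..m}. u i = ((1 - \<rho>) + \<rho> / \<mu>) * forage_f (K i) (u i)
                         + (1 - \<rho>) / real m * (1 - \<mu>)) \<and>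
     \<mu> = (\<Sum>i=1..m. forage_f (K i) (u i))"

end

theory Submission imports Defs begin

lemma key:
  fixes m :: nat and K u :: "nat \<Rightarrow> real" and \<rho> \<mu> :: real
  assumes m1: "m \<ge> 1" and Kp: "\<And>i. i \<in> {1..m} \<Longrightarrow> K i > 0"
    and ss: "is_steady_state m K \<rho> u \<mu>" and r1: "1/2 \<le> \<rho>" and r2: "\<rho> < 1"
    and i: "i \<in> {1..m}"
  shows "0 \<le> u i - \<rho>*(1-\<mu>)/\<mu> * K i \<and>
         u i - \<rho>*(1-\<mu>)/\<mu> * K i \<le> (1-\<rho>) * (2*(K i+1)/((1/(real m^2*((\<Sum>j=1..m. K j)+1)))*K i))"
proof -
  define S where "S = (\<Sum>j=1..m. K j)"
  define \<delta> where "\<delta> = 1/(real m^2*(S+1))"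
  define t where "t = \<rho>*(1-\<mu>)/\<mu>"
  define c where "c = (1 - \<rho>) + \<rho> / \<mu>"
  define a where "a = (1 - \<rho>) / real m * (1 - \<mu>)"
  have u0: "\<And>j. j\<in>{1..m} \<Longrightarrow> u j \<ge> 0" and us: "(\<Sum>j=1..m. u j) = 1" and mu0: "0 < \<mu>" and mu1: "\<mu> < 1"
    and eq: "\<And>j. j\<in>{1..m} \<Longrightarrow> u j = c * forage_f (K j) (u j) + a"
    and mus: "\<mu> = (\<Sum>j=1..m. forage_f (K j) (u j))"
    using ss unfolding is_steady_state_def c_def a_def by auto
  have Spos: "S > 0" unfolding S_def using m1 Kp by (intro sum_pos) auto
  have KleS: "\<And>j. j\<in>{1..m} \<Longrightarrow> K j \<le> S"
    unfolding S_def using Kp by (intro member_le_sum) (auto intro: less_imp_le)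
  have apos: "a > 0" unfolding a_def using r2 mu1 m1 by auto
  have ct: "c - 1 = t" unfolding c_def t_def using mu0 by (simp add: field_simps)
  have upos: "\<And>j. j\<in>{1..m} \<Longrightarrow> u j > 0"
  proof -
    fix j assume j: "j\<in>{1..m}"
    show "u j > 0"
    proof (rule ccontr)
      assume "\<not> u j > 0" then have "u j = 0" using u0[OF j] by auto
      then show False using eq[OF j] apos by (simp add: forage_f_def)
    qed
  qed
  have ule1: "\<And>j. j\<in>{1..m} \<Longrightarrow> u j \<le> 1"
  proof -
    fix j assume j: "j\<in>{1..m}"
    have "u j \<le> (\<Sum>j=1..m. u j)" using u0 j by (intro member_le_sum) auto
    then show "u j \<le> 1" using us by simp
  qed
  have e_eq: "\<And>j. j\<in>{1..m} \<Longrightarrow> u j - t * K j = a * (K j + u j) / u j"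
  proof -
    fix j assume j: "j\<in>{1..m}"
    have p1: "u j > 0" "K j > 0" using upos[OF j] Kp[OF j] by auto
    have "u j * (K j + u j) = c * K j * u j + a * (K j + u j)"
      using eq[OF j] p1 by (simp add: forage_f_def field_simps)
    moreover have "c = t + 1" using ct by simp
    ultimately have "u j * u j = a * (K j + u j) + t * K j * u j"
      by (simp add: algebra_simps)
    then show "u j - t * K j = a * (K j + u j) / u j"
      using p1 by (simp add: field_simps)
  qed
  have gap: "1 - \<mu> = (\<Sum>j=1..m. u j ^ 2 / (K j + u j))"
  proof -
    have "1 - \<mu> = (\<Sum>j=1..m. u j - forage_f (K j) (u j))"
      using us mus by (simp add: sum_subtractf)
    also have "\<dots> = (\<Sum>j=1..m. u j ^ 2 / (K j + u j))"
    proof (rule sum.cong)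
      fix j assume j: "j\<in>{1..m}"
      have p1: "u j > 0" "K j > 0" using upos[OF j] Kp[OF j] by auto
      then show "u j - forage_f (K j) (u j) = u j ^ 2 / (K j + u j)"
        by (simp add: forage_f_def field_simps power2_eq_square)
    qed simp
    finally show ?thesis .
  qed
  obtain j where j: "j\<in>{1..m}" "u j \<ge> 1 / real m"
  proof (rule ccontr)
    assume "\<not> thesis"
    then have "\<forall>j\<in>{1..m}. u j < 1 / real m" using that by force
    then have "(\<Sum>j=1..m. u j) < (\<Sum>j=1..m. 1 / real m)"
      using m1 by (intro sum_strict_mono) auto
    then show False using us m1 by simp
  qed
  have dpos: "\<delta> > 0" unfolding \<delta>_def using m1 Spos by simp
  have "\<delta> \<le> u j ^ 2 / (K j + u j)"
  proof -
    have p1: "u j > 0" "K j > 0" "K j \<le> S" "u j \<le> 1" using upos[OF j(1)] Kp[OF j(1)] KleS[OF j(1)] ule1[OF j(1)] by auto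
    have "(1/real m)^2 \<le> u j ^ 2" using j(2) m1 by (intro power_mono) auto
    moreover have "K j + u j \<le> S + 1" using p1 by simp
    ultimately have "(1/real m)^2 / (S+1) \<le> u j ^ 2 / (K j + u j)"
      using p1 Spos by (intro frac_le) auto
    then show ?thesis unfolding \<delta>_def by (simp add: power_divide)
  qed
  also have "\<dots> \<le> 1 - \<mu>" unfolding gap using j(1) upos Kp
    by (intro member_le_sum) (auto intro!: divide_nonneg_pos add_pos_pos)
  finally have d1: "\<delta> \<le> 1 - \<mu>" .
  have tlow: "t \<ge> \<delta> / 2"
  proof -
    have "\<rho>*(1-\<mu>) \<le> \<rho>*(1-\<mu>)/\<mu>" using mu0 mu1 r1
      by (simp add: le_divide_eq)
    moreover have "\<delta>/2 \<le> \<rho>*(1-\<mu>)"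
    proof -
      have "(1/2)*\<delta> \<le> \<rho>*\<delta>" using r1 dpos by (intro mult_right_mono) auto
      also have "\<dots> \<le> \<rho>*(1-\<mu>)" using d1 r1 by (intro mult_left_mono) auto
      finally show ?thesis by simp
    qed
    ultimately show ?thesis unfolding t_def by linarith
  qed
  have Ki: "K i > 0" and ui: "u i > 0" "u i \<le> 1" using Kp[OF i] upos[OF i] ule1[OF i] by auto
  have e1: "0 \<le> u i - t * K i" using e_eq[OF i] apos Ki ui by simp
  have uilow: "u i \<ge> \<delta> * K i / 2"
  proof -
    have "\<delta> * K i / 2 \<le> t * K i" using tlow Ki by (simp add: mult_right_mono)
    then show ?thesis using e1 by linarith
  qed
  have ale: "a \<le> 1 - \<rho>" unfolding a_def using m1 mu0 mu1 r2
  proof -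
    have "(1 - \<rho>) / real m * (1 - \<mu>) \<le> (1 - \<rho>) / real m * 1"
      using r2 mu0 by (intro mult_left_mono) auto
    also have "\<dots> \<le> (1 - \<rho>) / 1" unfolding mult_1_right using r2 m1 by (intro divide_left_mono) auto
    finally show "(1 - \<rho>) / real m * (1 - \<mu>) \<le> 1 - \<rho>" by simp
  qed
  have "a * (K i + u i) / u i \<le> (1-\<rho>) * (K i + 1) / (\<delta> * K i / 2)"
    using apos ale ui uilow Ki dpos
    by (intro frac_le mult_mono) auto
  also have "\<dots> = (1-\<rho>) * (2*(K i+1)/(\<delta>*K i))" by simp
  finally show ?thesis using e1 e_eq[OF i] unfolding t_def \<delta>_def S_def by simp
qed


theorem mainTheorem2:
  fixes m :: nat and K :: "nat \<Rightarrow> real"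
    and U :: "real \<Rightarrow> nat \<Rightarrow> real" and M :: "real \<Rightarrow> real"
  assumes "m \<ge> 1"
    and "\<And>i. i \<in> {1..m} \<Longrightarrow> K i > 0"
    and "\<And>\<rho>. 0 \<le> \<rho> \<Longrightarrow> \<rho> < 1 \<Longrightarrow>
           is_steady_state m K \<rho> (U \<rho>) (M \<rho>) \<and>
           (\<forall>u \<mu>. is_steady_state m K \<rho> u \<mu> \<longrightarrow> (\<forall>i\<in>{1..m}. u i = U \<rho> i) \<and> \<mu> = M \<rho>)"
  shows "(\<forall>i\<in>{1..m}. ((\<lambda>\<rho>. U \<rho> i) \<longlongrightarrow> K i / (\<Sum>j=1..m. K j)) (at_left 1)) \<and>
         (M \<longlongrightarrow> (\<Sum>j=1..m. K j) / (1 + (\<Sum>j=1..m. K j))) (at_left 1)"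
proof -
  note m1 = assms(1) and Kp = assms(2)
  define S where "S = (\<Sum>j=1..m. K j)"
  define t where "t = (\<lambda>\<rho>. \<rho>*(1-M \<rho>)/M \<rho>)"
  define e where "e = (\<lambda>i \<rho>. U \<rho> i - t \<rho> * K i)"
  define E where "E = (\<lambda>\<rho>. \<Sum>j\<in>{1..m}. e j \<rho>)"
  define C where "C = (\<lambda>i. 2*(K i+1)/((1/(real m^2*(S+1)))*K i))"
  have Spos: "S > 0" unfolding S_def using m1 Kp by (intro sum_pos) auto
  have ev: "eventually (\<lambda>\<rho>. \<rho> \<in> {1/2<..<(1::real)}) (at_left 1)"
    by (rule eventually_at_left_real) simp
  have ss: "eventually (\<lambda>\<rho>. 1/2 \<le> \<rho> \<and> \<rho> < 1 \<and> is_steady_state m K \<rho> (U \<rho>) (M \<rho>)) (at_left 1)"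
    using ev by eventually_elim (use assms(3) in auto)
  have elim: "(e i \<longlongrightarrow> 0) (at_left 1)" if i: "i \<in> {1..m}" for i
  proof (rule tendsto_sandwich[where f = "\<lambda>_. 0" and h = "\<lambda>\<rho>. (1-\<rho>) * C i"])
    show "eventually (\<lambda>\<rho>. 0 \<le> e i \<rho>) (at_left 1)"
      using ss
    proof eventually_elim
      case (elim \<rho>)
      have "0 \<le> U \<rho> i - \<rho>*(1-M \<rho>)/M \<rho> * K i" using key[of m K \<rho> "U \<rho>" "M \<rho>" i] m1 Kp elim i by blast
      then show ?case unfolding e_def t_def by simp
    qed
    show "eventually (\<lambda>\<rho>. e i \<rho> \<le> (1-\<rho>) * C i) (at_left 1)"
      using ss
    proof eventually_elim
      case (elim \<rho>)
      have "U \<rho> i - \<rho>*(1-M \<rho>)/M \<rho> * K i \<le> (1-\<rho>) * (2*(K i+1)/((1/(real m^2*((\<Sum>j=1..m. K j)+1)))*K i))"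
        using key[of m K \<rho> "U \<rho>" "M \<rho>" i] m1 Kp elim i by blast
      then show ?case unfolding e_def t_def C_def S_def by simp
    qed
    show "((\<lambda>_. 0::real) \<longlongrightarrow> 0) (at_left 1)" by simp
    have "((\<lambda>\<rho>. (1-\<rho>) * C i) \<longlongrightarrow> (1-1) * C i) (at_left (1::real))"
      by (intro tendsto_intros)
    then show "((\<lambda>\<rho>. (1-\<rho>) * C i) \<longlongrightarrow> 0) (at_left (1::real))" by simp
  qed
  have Elim: "(E \<longlongrightarrow> 0) (at_left 1)"
    unfolding E_def by (rule tendsto_null_sum) (use elim in auto)
  have teq: "eventually (\<lambda>\<rho>. t \<rho> = (1 - E \<rho>) / S) (at_left 1)"
    using ss
  proof eventually_elim
    case (elim \<rho>)
    then have "(\<Sum>j=1..m. U \<rho> j) = 1" unfolding is_steady_state_def by auto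
    moreover have "(\<Sum>j=1..m. U \<rho> j) = t \<rho> * S + E \<rho>"
      unfolding E_def e_def S_def by (simp add: sum_subtractf sum_distrib_left)
    ultimately show ?case using Spos by (simp add: field_simps)
  qed
  have part1: "((\<lambda>\<rho>. U \<rho> i) \<longlongrightarrow> K i / S) (at_left 1)" if i: "i \<in> {1..m}" for i
  proof -
    have "((\<lambda>\<rho>. K i * ((1 - E \<rho>) / S) + e i \<rho>) \<longlongrightarrow> K i * ((1 - 0) / S) + 0) (at_left 1)"
      by (intro tendsto_intros Elim elim[OF i]) (use Spos in simp)
    then have "((\<lambda>\<rho>. K i * ((1 - E \<rho>) / S) + e i \<rho>) \<longlongrightarrow> K i / S) (at_left 1)" by simp
    moreover have "eventually (\<lambda>\<rho>. K i * ((1 - E \<rho>) / S) + e i \<rho> = U \<rho> i) (at_left 1)"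
      using teq by eventually_elim (simp add: e_def algebra_simps)
    ultimately show ?thesis by (rule Lim_transform_eventually)
  qed
  have part2: "(M \<longlongrightarrow> S / (1 + S)) (at_left 1)"
  proof -
    have "((\<lambda>\<rho>. \<rho> / (\<rho> + (1 - E \<rho>) / S)) \<longlongrightarrow> 1 / (1 + (1 - 0) / S)) (at_left (1::real))"
    proof (intro tendsto_intros Elim)
      have "0 < 1 + (1 - 0) / S" using Spos by (intro add_pos_pos) auto
      then show "1 + (1 - 0) / S \<noteq> 0" by linarith
      show "S \<noteq> 0" using Spos by simp
    qed
    moreover have "1 / (1 + (1 - 0) / S) = S / (1 + S)" using Spos by (simp add: field_simps)
    moreover have "eventually (\<lambda>\<rho>. \<rho> / (\<rho> + (1 - E \<rho>) / S) = M \<rho>) (at_left 1)"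
      using teq ss
    proof eventually_elim
      case (elim \<rho>)
      then have mu: "0 < M \<rho>" "M \<rho> < 1" "\<rho> > 0" unfolding is_steady_state_def by auto
      have "\<rho> + t \<rho> = \<rho> / M \<rho>" unfolding t_def using mu by (simp add: field_simps)
      then show ?case using elim(1) mu by simp
    qed
    ultimately show ?thesis using Lim_transform_eventually by metis
  qed
  show ?thesis using part1 part2 unfolding S_def by auto
qed

end
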